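(* In the algebra $\mathcal A_N$ the following identities hold for all $i,j,l,m\in I_N$. <ol> <li>$[s_{ij},\gamma_{lm}]=\delta_{jl}\gamma_{im}-\delta_{im}\gamma_{lj}$.</li> <li>$[s_{ij},s_{lm}]=\delta_{jl}s_{im}-\delta_{im}s_{lj}+\delta_{jl}\delta_{im}(l-i)$.</li> <li>$[t_{ij},t_{lm}]=\delta_{jl}t_{im}-\delta_{im}t_{lj}+(k+1)\delta_{jl}\delta_{im}(l-i)$.</li> <li>$\mathbb D\gamma_{ij}+\gamma_{ij}\mathbb D=2t_{ij}$.</li> <li>$[\mathbb D,t_{ij}]=(k+1)(i-j)\gamma_{ij}$.</li> <li>$[\mathbb D^2,\gamma_{ij}]=2(k+1)(i-j)\gamma_{ij}$ and $[\mathbb D^2,t_{ij}]=2(k+1)(i-j)t_{ij}$.</li> </ol> In particular, none of these relations depends on the cutoff $N$.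
   Context: Fix an integer $N\ge1$ and a number $k\in\mathbb C$ (the level), and let $I_N=\{-N,\dots,N\}$. Let $\mathcal U_k$ be the complex unital associative algebra generated by elements $e_{ij}$, $i,j\in I_N$, subject to $$e_{ij}e_{lm}-e_{lm}e_{ij}=\delta_{jl}e_{im}-\delta_{im}e_{lj}+k\,\delta_{jl}\delta_{im}(l-i).$$ Let $Cl_N$ be the complex Clifford algebra generated by $\gamma_{ij}$, $i,j\in I_N$, subject to $\gamma_{ij}\gamma_{lm}+\gamma_{lm}\gamma_{ij}=2\delta_{im}\delta_{jl}$. Let $\mathcal A_N=\mathcal U_k\otimes Cl_N$, in which the $e_{ij}$ commute with the $\gamma_{lm}$. Brackets denote commutators. Define the normal-ordered spin operators $$s_{ij}=\tfrac12\sum_{l\in I_N}\gamma_{il}\gamma_{lj}-\big(N-i+\tfrac12\big)\delta_{ij},$$ set $t_{ij}=e_{ij}+s_{ij}$, and define $$\mathbb D=\sum_{i,j\in I_N}e_{ij}\gamma_{ji}+\tfrac13\Big(\sum_{i>j}s_{ij}\gamma_{ji}+\sum_{i\le j}\gamma_{ji}s_{ij}\Big).$$ *)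

theory Defs
  imports Complex_Main
begin

text \<open>A unital ring 'a together with a central unital ring homomorphism
  emb from the complex numbers, i.e. 'a is a unital complex algebra.\<close>
definition complex_alg_emb :: "(complex \<Rightarrow> 'a::ring_1) \<Rightarrow> bool" where
  "complex_alg_emb emb \<longleftrightarrow>
     (\<forall>x y. emb (x + y) = emb x + emb y) \<and>
     (\<forall>x y. emb (x * y) = emb x * emb y) \<and>
     emb 1 = 1 \<and>
     (\<forall>x a. emb x * a = a * emb x)"

definition commut :: "'a::ring \<Rightarrow> 'a \<Rightarrow> 'a" where
  "commut a b = a * b - b * a"

definition IN :: "int \<Rightarrow> int set" where
  "IN N = {-N..N}"

definition spin :: "(complex \<Rightarrow> 'a::ring_1) \<Rightarrow> int \<Rightarrow> (int \<Rightarrow> int \<Rightarrow> 'a) \<Rightarrow> int \<Rightarrow> int \<Rightarrow> 'a" where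
  "spin emb N \<gamma> i j =
     emb (1/2) * (\<Sum>l\<in>IN N. \<gamma> i l * \<gamma> l j)
     - (if i = j then emb (of_int N - of_int i + 1/2) else 0)"

definition tee :: "(complex \<Rightarrow> 'a::ring_1) \<Rightarrow> int \<Rightarrow> (int \<Rightarrow> int \<Rightarrow> 'a) \<Rightarrow> (int \<Rightarrow> int \<Rightarrow> 'a) \<Rightarrow> int \<Rightarrow> int \<Rightarrow> 'a" where
  "tee emb N \<gamma> e i j = e i j + spin emb N \<gamma> i j"

definition Dirac :: "(complex \<Rightarrow> 'a::ring_1) \<Rightarrow> int \<Rightarrow> (int \<Rightarrow> int \<Rightarrow> 'a) \<Rightarrow> (int \<Rightarrow> int \<Rightarrow> 'a) \<Rightarrow> 'a" where
  "Dirac emb N \<gamma> e =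
     (\<Sum>(i,j)\<in>IN N \<times> IN N. e i j * \<gamma> j i)
     + emb (1/3) * ((\<Sum>(i,j)\<in>{(i,j)\<in>IN N \<times> IN N. i > j}. spin emb N \<gamma> i j * \<gamma> j i)
                   + (\<Sum>(i,j)\<in>{(i,j)\<in>IN N \<times> IN N. i \<le> j}. \<gamma> j i * spin emb N \<gamma> i j))"

end

theory Submission
  imports Defs
begin


lemma commut_add_left: "commut (a + b) c = commut a c + commut b c"
  by (simp add: commut_def algebra_simps)
lemma commut_add_right: "commut c (a + b) = commut c a + commut c b"
  by (simp add: commut_def algebra_simps)
lemma commut_diff_left: "commut (a - b) (c::'a::ring) = commut a c - commut b c"
  by (simp add: commut_def algebra_simps)
lemma commut_diff_right: "commut (c::'a::ring) (a - b) = commut c a - commut c b"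
  by (simp add: commut_def algebra_simps)
lemma commut_mult_left: "commut (a * b) (c::'a::ring) = a * commut b c + commut a c * b"
  by (simp add: commut_def algebra_simps)
lemma commut_mult_right: "commut (c::'a::ring) (a * b) = commut c a * b + a * commut c b"
  by (simp add: commut_def algebra_simps)
lemma commut_sum_left: "commut (sum f A) (c::'a::ring) = (\<Sum>x\<in>A. commut (f x) c)"
  by (simp add: commut_def sum_distrib_left sum_distrib_right sum_subtractf)
lemma commut_sum_right: "commut (c::'a::ring) (sum f A) = (\<Sum>x\<in>A. commut c (f x))"
  by (simp add: commut_def sum_distrib_left sum_distrib_right sum_subtractf)
lemma commut_zero[simp]: "commut 0 (c::'a::ring) = 0" "commut c 0 = 0"
  by (simp_all add: commut_def)

locale Aset =
  fixes emb :: "complex \<Rightarrow> 'a::ring_1"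
    and N :: int and k :: complex
    and e \<gamma> :: "int \<Rightarrow> int \<Rightarrow> 'a"
  assumes alg: "complex_alg_emb emb"
    and rel_e: "\<And>i j l m. \<lbrakk>i \<in> IN N; j \<in> IN N; l \<in> IN N; m \<in> IN N\<rbrakk> \<Longrightarrow>
        e i j * e l m - e l m * e i j =
          (if j = l then e i m else 0) - (if i = m then e l j else 0)
          + (if j = l \<and> i = m then emb (k * of_int (l - i)) else 0)"
    and rel_cl: "\<And>i j l m. \<lbrakk>i \<in> IN N; j \<in> IN N; l \<in> IN N; m \<in> IN N\<rbrakk> \<Longrightarrow>
        \<gamma> i j * \<gamma> l m + \<gamma> l m * \<gamma> i j = (if i = m \<and> j = l then 2 else 0)"
    and N1: "N \<ge> 1"
    and rel_eg: "\<And>i j l m. \<lbrakk>i \<in> IN N; j \<in> IN N; l \<in> IN N; m \<in> IN N\<rbrakk> \<Longrightarrow>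
        e i j * \<gamma> l m = \<gamma> l m * e i j"
begin

lemma emb_add: "emb (x + y) = emb x + emb y" using alg unfolding complex_alg_emb_def by blast
lemma emb_mult: "emb (x * y) = emb x * emb y" using alg unfolding complex_alg_emb_def by blast
lemma emb_1[simp]: "emb 1 = 1" using alg unfolding complex_alg_emb_def by blast
lemma emb_central: "emb x * a = a * emb x" using alg unfolding complex_alg_emb_def by blast
lemma emb_0[simp]: "emb 0 = 0" using emb_add[of 0 0] by simp
lemma emb_neg: "emb (- x) = - emb x"
proof -
  have "emb x + emb (-x) = 0" using emb_add[of x "-x"] by simp
  then show ?thesis by (metis minus_unique)
qed
lemma emb_diff: "emb (x - y) = emb x - emb y" using emb_add[of x "-y"] by (simp add: emb_neg)
lemma emb_of_nat: "emb (of_nat n) = of_nat n"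
  by (induction n) (simp_all add: emb_add)
lemma emb_of_int: "emb (of_int n) = of_int n"
proof (cases "n \<ge> 0")
  case True then show ?thesis using emb_of_nat[of "nat n"] by simp
next
  case False then show ?thesis using emb_of_nat[of "nat (-n)"] emb_neg[of "of_nat (nat (-n))"] by simp
qed
lemma emb_numeral: "emb (numeral n) = numeral n"
  using emb_of_nat[of "numeral n"] by simp
lemma emb_half: "emb (1/2) * (x + x) = x"
proof -
  have "emb (1/2) * (x + x) = (emb (1/2) * 2) * x" by (simp add: algebra_simps mult_2 emb_central)
  also have "emb (1/2) * 2 = 1" using emb_mult[of "1/2" 2] by (simp add: emb_numeral)
  finally show ?thesis by simp
qed
lemma emb_third: "emb (1/3) * (of_int 6 * x) = 2 * x"
proof -
  have "emb (1/3) * (of_int 6 * x) = (emb (1/3) * of_int 6) * x" by (simp add: algebra_simps)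
  also have "emb (1/3) * of_int 6 = 2" using emb_mult[of "1/3" 6] by (simp add: emb_numeral emb_of_int)
  finally show ?thesis by simp
qed

lemma commut_emb_left: "commut (emb x * a) b = emb x * commut a b"
  by (simp add: commut_def algebra_simps emb_central)
lemma commut_emb_right: "commut b (emb x * a) = emb x * commut b a"
  by (simp add: commut_def algebra_simps emb_central)
lemma commut_emb[simp]: "commut (emb x) b = 0" "commut b (emb x) = 0"
  by (simp_all add: commut_def emb_central)

abbreviation "II \<equiv> IN N"
lemma finII[simp]: "finite II" by (simp add: IN_def)

definition Q where "Q i j = (\<Sum>a\<in>II. \<gamma> i a * \<gamma> a j)"

lemma spin_Q: "spin emb N \<gamma> i j = emb (1/2) * Q i j - (if i = j then emb (of_int N - of_int i + 1/2) else 0)"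
  by (simp add: spin_def Q_def)

lemma commut_Q_gamma:
  assumes "i \<in> II" "j \<in> II" "l \<in> II" "m \<in> II"
  shows "commut (Q i j) (\<gamma> l m) = (if j = l then \<gamma> i m + \<gamma> i m else 0) - (if i = m then \<gamma> l j + \<gamma> l j else 0)"
proof -
  have "commut (Q i j) (\<gamma> l m) = (\<Sum>a\<in>II. \<gamma> i a * (\<gamma> a j * \<gamma> l m + \<gamma> l m * \<gamma> a j) - (\<gamma> i a * \<gamma> l m + \<gamma> l m * \<gamma> i a) * \<gamma> a j)"
    unfolding Q_def commut_sum_left by (rule sum.cong) (simp_all add: commut_def algebra_simps)
  also have "\<dots> = (\<Sum>a\<in>II. (if a = m then (if j = l then \<gamma> i a * 2 else 0) else 0) - (if a = l then (if i = m then 2 * \<gamma> a j else 0) else 0))"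
    by (rule sum.cong) (use assms in \<open>auto simp: rel_cl\<close>)
  also have "\<dots> = (if j = l then \<gamma> i m + \<gamma> i m else 0) - (if i = m then \<gamma> l j + \<gamma> l j else 0)"
    using assms by (simp add: sum_subtractf mult_2 mult_2_right)
  finally show ?thesis .
qed

lemma spin_gamma:
  assumes "i \<in> II" "j \<in> II" "l \<in> II" "m \<in> II"
  shows "commut (spin emb N \<gamma> i j) (\<gamma> l m) = (if j = l then \<gamma> i m else 0) - (if i = m then \<gamma> l j else 0)"
  unfolding spin_Q commut_diff_left commut_emb_left using assms
  by (simp add: commut_Q_gamma right_diff_distrib emb_half)


abbreviation "s \<equiv> spin emb N \<gamma>"
abbreviation "cc i \<equiv> emb (of_int N - of_int i + 1/2)"

lemma if_mult_l: "(if P then x else 0) * (y::'a) = (if P then x * y else 0)" by simp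
lemma if_mult_r: "(y::'a) * (if P then x else 0) = (if P then y * x else 0)" by simp
lemma sum_if_const: "(\<Sum>x\<in>A. if P then f x else (0::'a)) = (if P then \<Sum>x\<in>A. f x else 0)" by simp

lemma commut_anti: "commut a b = - commut (b::'a) a" by (simp add: commut_def)

lemma Q_spin: "emb (1/2) * Q i j = s i j + (if i = j then cc i else 0)"
  by (simp add: spin_Q)

lemma Q_eq: "Q i j = 2 * (s i j + (if i = j then cc i else 0))"
proof -
  have "2 * (emb (1/2) * Q i j) = emb (1/2) * (Q i j + Q i j)"
    by (simp add: mult_2 distrib_left)
  also have "\<dots> = Q i j" by (rule emb_half)
  finally show ?thesis by (simp add: Q_spin)
qed

lemma cc_diff: "cc i - cc l = emb (of_int (l - i))"
  by (simp add: emb_diff[symmetric])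

lemma commut_spin_Q:
  assumes "i \<in> II" "j \<in> II" "l \<in> II" "m \<in> II"
  shows "commut (s i j) (Q l m) = (if j = l then Q i m else 0) - (if i = m then Q l j else 0)"
proof -
  have "commut (s i j) (Q l m) = (\<Sum>a\<in>II. ((if j = l then \<gamma> i a * \<gamma> a m else 0) - (if a = i then \<gamma> l j * \<gamma> a m else 0))
       + ((if a = j then \<gamma> l a * \<gamma> i m else 0) - (if i = m then \<gamma> l a * \<gamma> a j else 0)))"
    unfolding Q_def commut_sum_right
    by (rule sum.cong) (use assms in \<open>auto simp: commut_mult_right spin_gamma left_diff_distrib right_diff_distrib\<close>)
  also have "\<dots> = (if j = l then Q i m else 0) - (if i = m then Q l j else 0)"
    using assms by (cases "j = l"; cases "i = m") (simp_all add: sum.distrib sum_subtractf Q_def)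
  finally show ?thesis .
qed

lemma spin_spin:
  assumes "i \<in> II" "j \<in> II" "l \<in> II" "m \<in> II"
  shows "commut (s i j) (s l m) = (if j = l then s i m else 0) - (if i = m then s l j else 0)
         + (if j = l \<and> i = m then emb (of_int (l - i)) else 0)"
proof -
  have "commut (s i j) (s l m) = emb (1/2) * commut (s i j) (Q l m)"
    unfolding spin_Q[of l m] commut_diff_right commut_emb_right by simp
  also have "\<dots> = (if j = l then emb (1/2) * Q i m else 0) - (if i = m then emb (1/2) * Q l j else 0)"
    using assms by (simp add: commut_spin_Q right_diff_distrib)
  also have "\<dots> = (if j = l then s i m else 0) - (if i = m then s l j else 0)
         + (if j = l \<and> i = m then emb (of_int (l - i)) else 0)"
    unfolding Q_spin using cc_diff[of i l] by (cases "j = l"; cases "i = m") (auto simp: algebra_simps)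
  finally show ?thesis .
qed

lemma e_gg: assumes "i \<in> II" "j \<in> II" "l \<in> II" "m \<in> II" "a \<in> II"
  shows "e i j * (\<gamma> l a * \<gamma> a m) = \<gamma> l a * \<gamma> a m * e i j"
proof -
  have h1: "e i j * \<gamma> l a = \<gamma> l a * e i j" by (rule rel_eg) (use assms in auto)
  have h2: "e i j * \<gamma> a m = \<gamma> a m * e i j" by (rule rel_eg) (use assms in auto)
  have "e i j * (\<gamma> l a * \<gamma> a m) = (e i j * \<gamma> l a) * \<gamma> a m" by (simp only: mult.assoc)
  also have "\<dots> = (\<gamma> l a * e i j) * \<gamma> a m" by (simp only: h1)
  also have "\<dots> = \<gamma> l a * (e i j * \<gamma> a m)" by (simp only: mult.assoc)
  also have "\<dots> = \<gamma> l a * (\<gamma> a m * e i j)" by (simp only: h2)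
  also have "\<dots> = \<gamma> l a * \<gamma> a m * e i j" by (simp only: mult.assoc)
  finally show ?thesis .
qed

lemma e_Q: assumes "i \<in> II" "j \<in> II" "l \<in> II" "m \<in> II" shows "commut (e i j) (Q l m) = 0"
proof -
  have "commut (e i j) (Q l m) = (\<Sum>a\<in>II. 0)"
    unfolding Q_def commut_sum_right
    by (rule sum.cong) (use assms in \<open>auto simp: commut_def e_gg\<close>)
  then show ?thesis by simp
qed

lemma e_s: assumes "i \<in> II" "j \<in> II" "l \<in> II" "m \<in> II" shows "commut (e i j) (s l m) = 0"
  unfolding spin_Q commut_diff_right commut_emb_right using assms by (simp add: e_Q)

lemma s_e: assumes "i \<in> II" "j \<in> II" "l \<in> II" "m \<in> II" shows "commut (s l m) (e i j) = 0"
  using e_s[OF assms] commut_anti by (metis neg_equal_0_iff_equal)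

lemma tee_tee:
  assumes "i \<in> II" "j \<in> II" "l \<in> II" "m \<in> II"
  shows "commut (tee emb N \<gamma> e i j) (tee emb N \<gamma> e l m)
       = (if j = l then tee emb N \<gamma> e i m else 0) - (if i = m then tee emb N \<gamma> e l j else 0)
         + (if j = l \<and> i = m then emb ((k + 1) * of_int (l - i)) else 0)"
proof -
  have ee: "commut (e i j) (e l m) = (if j = l then e i m else 0) - (if i = m then e l j else 0)
          + (if j = l \<and> i = m then emb (k * of_int (l - i)) else 0)"
    using rel_e[OF assms] by (simp add: commut_def)
  have kk: "emb ((k + 1) * of_int (l - i)) = emb (k * of_int (l - i)) + emb (of_int (l - i))"
    by (simp add: distrib_right emb_add)
  show ?thesis
    unfolding tee_def commut_add_left commut_add_right ee spin_spin[OF assms] e_s[OF assms] s_e[OF assms(3,4,1,2)] kk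
    by (cases "j = l"; cases "i = m") (simp_all add: algebra_simps)
qed

lemma pair_sum: "(\<Sum>(a,b)\<in>II\<times>II. f a b) = (\<Sum>a\<in>II. \<Sum>b\<in>II. f a b)"
  by (simp add: sum.cartesian_product)

lemma card_II: "card II = nat (2*N+1)" by (simp add: IN_def)

lemma card_le: assumes "b \<in> II" shows "card {a\<in>II. a \<le> b} = nat (b + N + 1)"
proof -
  have "{a\<in>II. a \<le> b} = {-N..b}" using assms by (auto simp: IN_def)
  then show ?thesis by simp
qed

lemma card_ge: assumes "a \<in> II" shows "card {b\<in>II. a \<le> b} = nat (N - a + 1)"
proof -
  have "{b\<in>II. a \<le> b} = {a..N}" using assms by (auto simp: IN_def)
  then show ?thesis by simp
qed

definition "P2 = {(a,b)\<in>II\<times>II. a \<le> b}"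
definition "P1 = {(a,b)\<in>II\<times>II. a > b}"

lemma sum_P2: "(\<Sum>p\<in>P2. f p) = (\<Sum>a\<in>II. \<Sum>b\<in>II. if a \<le> b then f (a,b) else 0)"
proof -
  have "(\<Sum>p\<in>P2. f p) = (\<Sum>p\<in>II\<times>II. if fst p \<le> snd p then f p else 0)"
    unfolding P2_def by (subst sum.inter_filter[symmetric]) (auto intro!: sum.cong)
  also have "\<dots> = (\<Sum>(a,b)\<in>II\<times>II. if a \<le> b then f (a,b) else 0)"
    by (rule sum.cong) auto
  also have "\<dots> = (\<Sum>a\<in>II. \<Sum>b\<in>II. if a \<le> b then f (a,b) else 0)"
    by (rule pair_sum)
  finally show ?thesis .
qed

lemma sumP2_b: "(\<Sum>p\<in>P2. g (snd p)) = (\<Sum>b\<in>II. of_int (b+N+1) * (g b :: 'a))"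
proof -
  have "(\<Sum>p\<in>P2. g (snd p)) = (\<Sum>a\<in>II. \<Sum>b\<in>II. if a \<le> b then g b else 0)"
    unfolding sum_P2 snd_conv by (rule refl)
  also have "\<dots> = (\<Sum>b\<in>II. \<Sum>a\<in>II. if a \<le> b then g b else 0)"
    by (rule sum.swap)
  also have "\<dots> = (\<Sum>b\<in>II. of_int (b+N+1) * g b)"
  proof (rule sum.cong)
    fix b assume b: "b \<in> II"
    have "(\<Sum>a\<in>II. if a \<le> b then g b else 0) = (\<Sum>a\<in>{a\<in>II. a \<le> b}. g b)"
      by (rule sum.inter_filter[symmetric]) simp
    also have "\<dots> = of_nat (card {a\<in>II. a \<le> b}) * g b" by (rule sum_constant)
    also have "\<dots> = of_nat (nat (b + N + 1)) * g b" by (simp only: card_le[OF b])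
    also have "\<dots> = of_int (b+N+1) * g b" using b by (simp add: IN_def)
    finally show "(\<Sum>a\<in>II. if a \<le> b then g b else 0) = of_int (b+N+1) * g b" .
  qed simp
  finally show ?thesis .
qed

lemma sumP2_a: "(\<Sum>p\<in>P2. g (fst p)) = (\<Sum>a\<in>II. of_int (N-a+1) * (g a :: 'a))"
proof -
  have "(\<Sum>p\<in>P2. g (fst p)) = (\<Sum>a\<in>II. \<Sum>b\<in>II. if a \<le> b then g a else 0)"
    unfolding sum_P2 fst_conv by (rule refl)
  also have "\<dots> = (\<Sum>a\<in>II. of_int (N-a+1) * g a)"
  proof (rule sum.cong)
    fix a assume a: "a \<in> II"
    have "(\<Sum>b\<in>II. if a \<le> b then g a else 0) = (\<Sum>b\<in>{b\<in>II. a \<le> b}. g a)"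
      by (rule sum.inter_filter[symmetric]) simp
    also have "\<dots> = of_nat (card {b\<in>II. a \<le> b}) * g a" by (rule sum_constant)
    also have "\<dots> = of_nat (nat (N - a + 1)) * g a" by (simp only: card_ge[OF a])
    also have "\<dots> = of_int (N-a+1) * g a" using a by (simp add: IN_def)
    finally show "(\<Sum>b\<in>II. if a \<le> b then g a else 0) = of_int (N-a+1) * g a" .
  qed simp
  finally show ?thesis .
qed

definition "EE = (\<Sum>(a,b)\<in>II\<times>II. e a b * \<gamma> b a)"
definition "FF = (\<Sum>(a,b)\<in>II\<times>II. s a b * \<gamma> b a)"
definition "GG = (\<Sum>c\<in>II. emb (of_int (2*c)) * \<gamma> c c)"

lemma GG_count: "(\<Sum>p\<in>P2. \<gamma> (snd p) (snd p) - \<gamma> (fst p) (fst p)) = GG"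
proof -
  have "(\<Sum>p\<in>P2. \<gamma> (snd p) (snd p) - \<gamma> (fst p) (fst p))
     = (\<Sum>c\<in>II. of_int (c+N+1) * \<gamma> c c) - (\<Sum>c\<in>II. of_int (N-c+1) * \<gamma> c c)"
    by (simp only: sum_subtractf sumP2_a[of "\<lambda>c. \<gamma> c c"] sumP2_b[of "\<lambda>c. \<gamma> c c"])
  also have "\<dots> = (\<Sum>c\<in>II. (of_int (c+N+1) - of_int (N-c+1)) * \<gamma> c c)"
    by (simp only: sum_subtractf left_diff_distrib)
  also have "\<dots> = GG" unfolding GG_def emb_of_int
  proof (rule sum.cong)
    fix c :: int
    have "(c+N+1) - (N-c+1) = 2*c" by simp
    then show "(of_int (c+N+1) - of_int (N-c+1)) * \<gamma> c c = of_int (2*c) * \<gamma> c c"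
      by (simp only: of_int_diff[symmetric])
  qed simp
  finally show ?thesis .
qed

lemma Dirac_eq: "Dirac emb N \<gamma> e = EE + emb (1/3) * (FF + GG)"
proof -
  have A: "(\<Sum>(a,b)\<in>P2. \<gamma> b a * s a b) = (\<Sum>(a,b)\<in>P2. s a b * \<gamma> b a) + (\<Sum>p\<in>P2. \<gamma> (snd p) (snd p) - \<gamma> (fst p) (fst p))"
  proof -
    have "(\<Sum>(a,b)\<in>P2. \<gamma> b a * s a b) = (\<Sum>p\<in>P2. s (fst p) (snd p) * \<gamma> (snd p) (fst p) + (\<gamma> (snd p) (snd p) - \<gamma> (fst p) (fst p)))"
    proof (rule sum.cong)
      fix p assume "p \<in> P2"
      then obtain a b where p: "p = (a,b)" "a \<in> II" "b \<in> II" by (auto simp: P2_def)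
      have "commut (s a b) (\<gamma> b a) = \<gamma> a a - \<gamma> b b" using spin_gamma[OF p(2,3,3,2)] by simp
      then show "(case p of (a,b) \<Rightarrow> \<gamma> b a * s a b) = s (fst p) (snd p) * \<gamma> (snd p) (fst p) + (\<gamma> (snd p) (snd p) - \<gamma> (fst p) (fst p))"
        unfolding p by (simp add: commut_def algebra_simps)
    qed simp
    then show ?thesis by (simp add: sum.distrib split_def)
  qed
  have B: "(\<Sum>(a,b)\<in>P1. s a b * \<gamma> b a) + (\<Sum>(a,b)\<in>P2. s a b * \<gamma> b a) = FF"
  proof -
    have U: "P1 \<union> P2 = II \<times> II" by (auto simp: P1_def P2_def)
    have I: "P1 \<inter> P2 = {}" by (auto simp: P1_def P2_def)
    have f1: "finite P1" by (rule finite_subset[of _ "II\<times>II"]) (auto simp: P1_def)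
    have f2: "finite P2" by (rule finite_subset[of _ "II\<times>II"]) (auto simp: P2_def)
    show ?thesis unfolding FF_def U[symmetric] by (rule sum.union_disjoint[symmetric, OF f1 f2 I])
  qed
  have D: "Dirac emb N \<gamma> e = EE + emb (1/3) * ((\<Sum>(a,b)\<in>P1. s a b * \<gamma> b a) + (\<Sum>(a,b)\<in>P2. \<gamma> b a * s a b))"
    by (simp add: Dirac_def EE_def P1_def P2_def)
  show ?thesis unfolding D A GG_count B[symmetric] by (simp add: add.assoc)
qed


lemma pair_delta_b: assumes "i \<in> II" shows "(\<Sum>a\<in>II. \<Sum>b\<in>II. if b = i then f a else 0) = (\<Sum>a\<in>II. (f a :: 'a))"
  using assms by simp
lemma pair_delta_a: assumes "i \<in> II" shows "(\<Sum>a\<in>II. \<Sum>b\<in>II. if a = i then f b else 0) = (\<Sum>b\<in>II. (f b :: 'a))"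
  using assms by (simp add: sum_if_const)
lemma pair_delta_ab: assumes "i \<in> II" "j \<in> II"
  shows "(\<Sum>a\<in>II. \<Sum>b\<in>II. if a = i then if b = j then x else 0 else 0) = (x :: 'a)"
  using assms by (simp add: sum_if_const)

lemma g_e: assumes "i \<in> II" "j \<in> II" "l \<in> II" "m \<in> II" shows "commut (\<gamma> l m) (e i j) = 0"
  using rel_eg[OF assms] by (simp add: commut_def)

lemma acomE_pt: assumes "a \<in> II" "b \<in> II" "i \<in> II" "j \<in> II"
  shows "e a b * \<gamma> b a * \<gamma> i j + \<gamma> i j * (e a b * \<gamma> b a) = (if a = i then if b = j then 2 * e i j else 0 else 0)"
proof -
  have h: "\<gamma> i j * e a b = e a b * \<gamma> i j" using rel_eg[OF assms(1,2,3,4)] by simp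
  have "e a b * \<gamma> b a * \<gamma> i j + \<gamma> i j * (e a b * \<gamma> b a) = e a b * (\<gamma> b a * \<gamma> i j + \<gamma> i j * \<gamma> b a)"
    by (simp add: distrib_left h flip: mult.assoc)
  also have "\<dots> = (if a = i then if b = j then 2 * e i j else 0 else 0)"
    using assms by (auto simp: rel_cl mult_2 mult_2_right)
  finally show ?thesis .
qed

lemma acomE: assumes "i \<in> II" "j \<in> II" shows "EE * \<gamma> i j + \<gamma> i j * EE = 2 * e i j"
proof -
  have "EE * \<gamma> i j + \<gamma> i j * EE = (\<Sum>(a,b)\<in>II\<times>II. e a b * \<gamma> b a * \<gamma> i j + \<gamma> i j * (e a b * \<gamma> b a))"
    by (simp add: EE_def sum_distrib_left sum_distrib_right sum.distrib split_def)
  also have "\<dots> = (\<Sum>(a,b)\<in>II\<times>II. if a = i then if b = j then 2 * e i j else 0 else 0)"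
    by (rule sum.cong) (use assms in \<open>auto simp: acomE_pt\<close>)
  also have "\<dots> = 2 * e i j" unfolding pair_sum by (rule pair_delta_ab[OF assms])
  finally show ?thesis .
qed

lemma acomF_pt: assumes "a \<in> II" "b \<in> II" "i \<in> II" "j \<in> II"
  shows "s a b * \<gamma> b a * \<gamma> i j + \<gamma> i j * (s a b * \<gamma> b a) =
    (if a = i then if b = j then 2 * s i j else 0 else 0) - (if b = i then \<gamma> a j * \<gamma> i a else 0)
    + (if a = j then \<gamma> i b * \<gamma> b j else 0)"
proof -
  have "s a b * \<gamma> b a * \<gamma> i j + \<gamma> i j * (s a b * \<gamma> b a) = s a b * (\<gamma> b a * \<gamma> i j + \<gamma> i j * \<gamma> b a) - commut (s a b) (\<gamma> i j) * \<gamma> b a"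
    by (simp add: commut_def algebra_simps)
  also have "\<dots> = (if a = i then if b = j then 2 * s i j else 0 else 0) - (if b = i then \<gamma> a j * \<gamma> i a else 0)
    + (if a = j then \<gamma> i b * \<gamma> b j else 0)"
    unfolding spin_gamma[OF assms(1,2,3,4)]
    using assms by (auto simp: rel_cl mult_2 mult_2_right algebra_simps)
  finally show ?thesis .
qed

lemma sum_gg: assumes "i \<in> II" "j \<in> II"
  shows "(\<Sum>a\<in>II. \<gamma> a j * \<gamma> i a) = of_nat (card II) * (if i = j then 2 else 0) - Q i j"
proof -
  have "(\<Sum>a\<in>II. \<gamma> a j * \<gamma> i a) = (\<Sum>a\<in>II. (if i = j then 2 else 0) - \<gamma> i a * \<gamma> a j)"
  proof (rule sum.cong)
    fix a assume a: "a \<in> II"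
    have "\<gamma> a j * \<gamma> i a + \<gamma> i a * \<gamma> a j = (if i = j then 2 else 0)"
      using rel_cl[OF a assms(2,1) a] by auto
    then show "\<gamma> a j * \<gamma> i a = (if i = j then 2 else 0) - \<gamma> i a * \<gamma> a j"
      by (simp add: eq_diff_eq)
  qed simp
  then show ?thesis by (simp add: sum_subtractf Q_def)
qed

lemma acomF: assumes "i \<in> II" "j \<in> II"
  shows "FF * \<gamma> i j + \<gamma> i j * FF = 2 * s i j + 2 * Q i j - of_nat (card II) * (if i = j then 2 else 0)"
proof -
  have "FF * \<gamma> i j + \<gamma> i j * FF = (\<Sum>(a,b)\<in>II\<times>II. s a b * \<gamma> b a * \<gamma> i j + \<gamma> i j * (s a b * \<gamma> b a))"
    by (simp add: FF_def sum_distrib_left sum_distrib_right sum.distrib split_def)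
  also have "\<dots> = (\<Sum>(a,b)\<in>II\<times>II. (if a = i then if b = j then 2 * s i j else 0 else 0) - (if b = i then \<gamma> a j * \<gamma> i a else 0)
    + (if a = j then \<gamma> i b * \<gamma> b j else 0))"
    by (rule sum.cong) (use assms in \<open>auto simp: acomF_pt\<close>)
  also have "\<dots> = 2 * s i j - (\<Sum>a\<in>II. \<gamma> a j * \<gamma> i a) + Q i j"
    unfolding pair_sum using assms by (simp add: sum.distrib sum_subtractf sum_if_const Q_def)
  also have "\<dots> = 2 * s i j + 2 * Q i j - of_nat (card II) * (if i = j then 2 else 0)"
    using assms by (simp add: sum_gg mult_2 algebra_simps)
  finally show ?thesis .
qed

lemma emb_acom: "emb x * a * g + g * (emb x * a) = emb x * (a * g + g * a)"
proof -
  have "g * (emb x * a) = emb x * (g * a)" by (metis emb_central mult.assoc)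
  then show ?thesis by (simp add: distrib_left mult.assoc)
qed

lemma acomG: assumes "i \<in> II" "j \<in> II"
  shows "GG * \<gamma> i j + \<gamma> i j * GG = (if i = j then emb (of_int (4*i)) else 0)"
proof -
  have "GG * \<gamma> i j + \<gamma> i j * GG = (\<Sum>c\<in>II. emb (of_int (2*c)) * (\<gamma> c c * \<gamma> i j + \<gamma> i j * \<gamma> c c))"
    by (simp only: GG_def sum_distrib_left sum_distrib_right sum.distrib[symmetric] emb_acom)
  also have "\<dots> = (\<Sum>c\<in>II. if c = i then (if i = j then emb (of_int (2*c)) * 2 else 0) else 0)"
    by (rule sum.cong) (use assms in \<open>auto simp: rel_cl\<close>)
  also have "\<dots> = (if i = j then emb (of_int (2*i)) * 2 else 0)"
    using assms by simp
  also have "emb (of_int (2*i)) * 2 = emb (of_int (4*i))"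
  proof -
    have "emb (of_int (4*i)) = emb (of_int (2*i) * 2)" by (rule arg_cong[where f=emb]) (simp add: algebra_simps)
    also have "\<dots> = emb (of_int (2*i)) * 2" by (simp only: emb_mult emb_numeral)
    finally show ?thesis by simp
  qed
  finally show ?thesis .
qed


lemma six: "6 * (x::'a) = x+x+x+x+x+x"
  by (simp only: numeral_Bit0 numeral_Bit1 numeral_One distrib_right mult_1_left add.assoc)

lemma emb_third': "emb (1/3) * (x+x+x+x+x+x) = x + x"
  using emb_third[of x] by (simp add: six mult_2)

lemma emb_mid: "g * (emb x * Y) = emb x * (g * Y)"
proof -
  have "g * (emb x * Y) = (g * emb x) * Y" by (simp only: mult.assoc)
  also have "\<dots> = (emb x * g) * Y" by (simp only: emb_central[of x g])
  finally show ?thesis by (simp only: mult.assoc)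
qed

lemma scalar0: "2 * (2 * cc i) - of_nat (card II) * 2 + emb (of_int (4*i)) = 0"
proof -
  have h1: "2 * (2 * cc i) = emb (2 * (2 * (of_int N - of_int i + 1/2)))" by (simp only: emb_mult emb_numeral)
  have h2: "of_nat (card II) * 2 = emb (of_nat (card II) * 2)" by (simp only: emb_mult emb_numeral emb_of_nat)
  have "2 * (2 * cc i) - of_nat (card II) * 2 + emb (of_int (4*i))
      = emb (2 * (2 * (of_int N - of_int i + 1/2)) - of_nat (card II) * 2 + of_int (4*i))"
    unfolding h1 h2 by (simp only: emb_add emb_diff)
  also have "\<dots> = emb 0"
  proof (rule arg_cong[where f=emb])
    have "(of_nat (card II) :: complex) = of_int (2*N+1)" using N1 by (simp add: card_II)
    then show "2 * (2 * (of_int N - of_int i + 1/2)) - of_nat (card II) * 2 + of_int (4*i) = (0::complex)"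
      by (simp add: algebra_simps)
  qed
  finally show ?thesis by simp
qed

lemma acomD: assumes "i \<in> II" "j \<in> II"
  shows "Dirac emb N \<gamma> e * \<gamma> i j + \<gamma> i j * Dirac emb N \<gamma> e = 2 * tee emb N \<gamma> e i j"
proof -
  have 1: "Dirac emb N \<gamma> e * \<gamma> i j + \<gamma> i j * Dirac emb N \<gamma> e
     = (EE * \<gamma> i j + \<gamma> i j * EE) + emb (1/3) * ((FF * \<gamma> i j + \<gamma> i j * FF) + (GG * \<gamma> i j + \<gamma> i j * GG))"
    unfolding Dirac_eq distrib_left distrib_right mult.assoc emb_mid by (simp add: add_ac)
  have inner: "(FF * \<gamma> i j + \<gamma> i j * FF) + (GG * \<gamma> i j + \<gamma> i j * GG) = s i j + s i j + s i j + s i j + s i j + s i j"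
  proof (cases "i = j")
    case True
    have "(FF * \<gamma> i j + \<gamma> i j * FF) + (GG * \<gamma> i j + \<gamma> i j * GG)
       = 2 * s i j + 2 * (2 * (s i j + cc i)) - of_nat (card II) * 2 + emb (of_int (4*i))"
      unfolding acomF[OF assms] acomG[OF assms] Q_eq using True by (simp add: algebra_simps)
    also have "\<dots> = s i j + s i j + s i j + s i j + s i j + s i j + (2 * (2 * cc i) - of_nat (card II) * 2 + emb (of_int (4*i)))"
      by (simp add: mult_2 algebra_simps)
    finally show ?thesis by (simp only: scalar0 add_0_right)
  next
    case False
    then show ?thesis unfolding acomF[OF assms] acomG[OF assms] Q_eq by (simp add: mult_2 add.assoc)
  qed
  show ?thesis unfolding 1 acomE[OF assms] inner emb_third' tee_def by (simp add: mult_2 add_ac)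
qed

lemma commE_pt: assumes "a \<in> II" "b \<in> II" "i \<in> II" "j \<in> II"
  shows "commut (e a b * \<gamma> b a) (e i j) + commut (e a b * \<gamma> b a) (s i j) =
    (if b = i then e a j * \<gamma> i a else 0) - (if a = j then e i b * \<gamma> b j else 0)
    + (if a = j then if b = i then emb (k * of_int (i - j)) * \<gamma> i j else 0 else 0)
    - (if b = j then e a j * \<gamma> i a else 0) + (if a = i then e i b * \<gamma> b j else 0)"
proof -
  have ee: "commut (e a b) (e i j) = (if b = i then e a j else 0) - (if a = j then e i b else 0)
          + (if b = i \<and> a = j then emb (k * of_int (i - a)) else 0)"
    using rel_e[OF assms] by (simp add: commut_def)
  have gs: "commut (\<gamma> b a) (s i j) = - ((if j = b then \<gamma> i a else 0) - (if i = a then \<gamma> b j else 0))"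
    using commut_anti spin_gamma[OF assms(3,4,2,1)] by metis
  show ?thesis
    unfolding commut_mult_left g_e[OF assms(3,4,2,1)] e_s[OF assms] ee gs
    by (cases "b = i"; cases "a = j"; cases "b = j"; cases "a = i") (simp_all add: algebra_simps)
qed

lemma commEE: assumes "i \<in> II" "j \<in> II"
  shows "commut EE (tee emb N \<gamma> e i j) = emb (k * of_int (i - j)) * \<gamma> i j"
proof -
  have "commut EE (tee emb N \<gamma> e i j) = (\<Sum>(a,b)\<in>II\<times>II. commut (e a b * \<gamma> b a) (e i j) + commut (e a b * \<gamma> b a) (s i j))"
    unfolding EE_def tee_def commut_add_right commut_sum_left by (simp add: sum.distrib split_def)
  also have "\<dots> = (\<Sum>(a,b)\<in>II\<times>II. (if b = i then e a j * \<gamma> i a else 0) - (if a = j then e i b * \<gamma> b j else 0)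
    + (if a = j then if b = i then emb (k * of_int (i - j)) * \<gamma> i j else 0 else 0)
    - (if b = j then e a j * \<gamma> i a else 0) + (if a = i then e i b * \<gamma> b j else 0))"
    by (rule sum.cong) (use assms in \<open>auto simp: commE_pt\<close>)
  also have "\<dots> = emb (k * of_int (i - j)) * \<gamma> i j"
    unfolding pair_sum using assms by (simp add: sum.distrib sum_subtractf sum_if_const)
  finally show ?thesis .
qed

lemma commF_pt: assumes "a \<in> II" "b \<in> II" "i \<in> II" "j \<in> II"
  shows "commut (s a b * \<gamma> b a) (e i j) + commut (s a b * \<gamma> b a) (s i j) =
    (if b = i then s a j * \<gamma> i a else 0) - (if a = j then s i b * \<gamma> b j else 0)
    + (if a = j then if b = i then emb (of_int (i - j)) * \<gamma> i j else 0 else 0)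
    - (if b = j then s a j * \<gamma> i a else 0) + (if a = i then s i b * \<gamma> b j else 0)"
proof -
  have gs: "commut (\<gamma> b a) (s i j) = - ((if j = b then \<gamma> i a else 0) - (if i = a then \<gamma> b j else 0))"
    using commut_anti spin_gamma[OF assms(3,4,2,1)] by metis
  show ?thesis
    unfolding commut_mult_left g_e[OF assms(3,4,2,1)] s_e[OF assms(3,4,1,2)] spin_spin[OF assms] gs
    by (cases "b = i"; cases "a = j"; cases "b = j"; cases "a = i") (simp_all add: algebra_simps)
qed

lemma commFF: assumes "i \<in> II" "j \<in> II"
  shows "commut FF (tee emb N \<gamma> e i j) = emb (of_int (i - j)) * \<gamma> i j"
proof -
  have "commut FF (tee emb N \<gamma> e i j) = (\<Sum>(a,b)\<in>II\<times>II. commut (s a b * \<gamma> b a) (e i j) + commut (s a b * \<gamma> b a) (s i j))"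
    unfolding FF_def tee_def commut_add_right commut_sum_left by (simp add: sum.distrib split_def)
  also have "\<dots> = (\<Sum>(a,b)\<in>II\<times>II. (if b = i then s a j * \<gamma> i a else 0) - (if a = j then s i b * \<gamma> b j else 0)
    + (if a = j then if b = i then emb (of_int (i - j)) * \<gamma> i j else 0 else 0)
    - (if b = j then s a j * \<gamma> i a else 0) + (if a = i then s i b * \<gamma> b j else 0))"
    by (rule sum.cong) (use assms in \<open>auto simp: commF_pt\<close>)
  also have "\<dots> = emb (of_int (i - j)) * \<gamma> i j"
    unfolding pair_sum using assms by (simp add: sum.distrib sum_subtractf sum_if_const)
  finally show ?thesis .
qed

lemma commGG: assumes "i \<in> II" "j \<in> II"
  shows "commut GG (tee emb N \<gamma> e i j) = emb (of_int (2*i)) * \<gamma> i j - emb (of_int (2*j)) * \<gamma> i j"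
proof -
  have "commut GG (tee emb N \<gamma> e i j) = (\<Sum>c\<in>II. (if c = i then emb (of_int (2*i)) * \<gamma> i j else 0) - (if c = j then emb (of_int (2*j)) * \<gamma> i j else 0))"
    unfolding GG_def commut_sum_left
  proof (rule sum.cong)
    fix c assume c: "c \<in> II"
    have gs: "commut (\<gamma> c c) (s i j) = - ((if j = c then \<gamma> i c else 0) - (if i = c then \<gamma> c j else 0))"
      using commut_anti spin_gamma[OF assms c c] by metis
    show "commut (emb (of_int (2*c)) * \<gamma> c c) (tee emb N \<gamma> e i j) = (if c = i then emb (of_int (2*i)) * \<gamma> i j else 0) - (if c = j then emb (of_int (2*j)) * \<gamma> i j else 0)"
      unfolding commut_emb_left tee_def commut_add_right g_e[OF assms c c] gs
      by (cases "c = i"; cases "c = j") (simp_all add: algebra_simps)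
  qed simp
  also have "\<dots> = emb (of_int (2*i)) * \<gamma> i j - emb (of_int (2*j)) * \<gamma> i j"
    using assms by (simp add: sum_subtractf)
  finally show ?thesis .
qed

lemma commD: assumes "i \<in> II" "j \<in> II"
  shows "commut (Dirac emb N \<gamma> e) (tee emb N \<gamma> e i j) = emb ((k + 1) * of_int (i - j)) * \<gamma> i j"
proof -
  have "commut (Dirac emb N \<gamma> e) (tee emb N \<gamma> e i j) = emb (k * of_int (i - j)) * \<gamma> i j
     + emb (1/3) * (emb (of_int (i - j)) * \<gamma> i j + (emb (of_int (2*i)) * \<gamma> i j - emb (of_int (2*j)) * \<gamma> i j))"
    unfolding Dirac_eq commut_add_left commut_emb_left commEE[OF assms] commFF[OF assms] commGG[OF assms] by simp
  also have "\<dots> = (emb (k * of_int (i - j)) + emb (1/3) * (emb (of_int (i - j)) + (emb (of_int (2*i)) - emb (of_int (2*j))))) * \<gamma> i j"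
    by (simp add: distrib_right left_diff_distrib mult.assoc)
  also have "emb (k * of_int (i - j)) + emb (1/3) * (emb (of_int (i - j)) + (emb (of_int (2*i)) - emb (of_int (2*j))))
     = emb (k * of_int (i - j) + 1/3 * (of_int (i - j) + (of_int (2*i) - of_int (2*j))))"
    by (simp only: emb_add emb_mult emb_diff)
  also have "k * of_int (i - j) + 1/3 * (of_int (i - j) + (of_int (2*i) - of_int (2*j))) = (k + 1) * (of_int (i - j) :: complex)"
    by (simp add: field_simps)
  finally show ?thesis .
qed

end

lemma sq_comm1:
  fixes D g T c :: "'a::ring_1"
  assumes h1: "D*g + g*D = 2*T" and h2: "D*T - T*D = c*g"
  shows "D^2*g - g*D^2 = 2*(c*g)"
proof -
  have a: "D*g = 2*T - g*D" using h1 by (simp add: eq_diff_eq)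
  have "D^2*g - g*D^2 = D*(D*g) - g*D*D" by (simp add: power2_eq_square mult.assoc)
  also have "\<dots> = D*(2*T - g*D) - g*D*D" by (simp only: a)
  also have "\<dots> = 2*(D*T) - (D*g)*D - g*D*D" by (simp add: mult_2 mult_2_right distrib_left right_diff_distrib mult.assoc)
  also have "\<dots> = 2*(D*T) - (2*T - g*D)*D - g*D*D" by (simp only: a)
  also have "\<dots> = 2*(D*T - T*D)" by (simp add: mult_2 algebra_simps)
  finally show ?thesis using h2 by simp
qed

lemma sq_comm2:
  fixes D g T c :: "'a::ring_1"
  assumes h1: "D*g + g*D = 2*T" and h2: "D*T - T*D = c*g" and hc: "c*D = D*c"
  shows "D^2*T - T*D^2 = c*(2*T)"
proof -
  have a: "D*T = T*D + c*g" using h2 by (simp add: diff_eq_eq)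
  have "D^2*T - T*D^2 = D*(D*T) - T*D*D" by (simp add: power2_eq_square mult.assoc)
  also have "\<dots> = D*(T*D + c*g) - T*D*D" by (simp only: a)
  also have "\<dots> = (D*T)*D + (D*c)*g - T*D*D" by (simp add: distrib_left mult.assoc)
  also have "\<dots> = (T*D + c*g)*D + (c*D)*g - T*D*D" by (simp only: a hc)
  also have "\<dots> = c*(D*g + g*D)" by (simp add: algebra_simps)
  also have "\<dots> = c*(2*T)" by (simp only: h1)
  finally show ?thesis .
qed


theorem mainTheorem8:
  fixes emb :: "complex \<Rightarrow> 'a::ring_1"
    and N :: int and k :: complex
    and e \<gamma> :: "int \<Rightarrow> int \<Rightarrow> 'a"
  assumes alg: "complex_alg_emb emb"
    and N1: "N \<ge> 1"
    and rel_e: "\<And>i j l m. \<lbrakk>i \<in> IN N; j \<in> IN N; l \<in> IN N; m \<in> IN N\<rbrakk> \<Longrightarrow>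
        e i j * e l m - e l m * e i j =
          (if j = l then e i m else 0) - (if i = m then e l j else 0)
          + (if j = l \<and> i = m then emb (k * of_int (l - i)) else 0)"
    and rel_cl: "\<And>i j l m. \<lbrakk>i \<in> IN N; j \<in> IN N; l \<in> IN N; m \<in> IN N\<rbrakk> \<Longrightarrow>
        \<gamma> i j * \<gamma> l m + \<gamma> l m * \<gamma> i j = (if i = m \<and> j = l then 2 else 0)"
    and rel_eg: "\<And>i j l m. \<lbrakk>i \<in> IN N; j \<in> IN N; l \<in> IN N; m \<in> IN N\<rbrakk> \<Longrightarrow>
        e i j * \<gamma> l m = \<gamma> l m * e i j"
    and idx: "i \<in> IN N" "j \<in> IN N" "l \<in> IN N" "m \<in> IN N"
  shows
    "commut (spin emb N \<gamma> i j) (\<gamma> l m)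
       = (if j = l then \<gamma> i m else 0) - (if i = m then \<gamma> l j else 0)
     \<and> commut (spin emb N \<gamma> i j) (spin emb N \<gamma> l m)
       = (if j = l then spin emb N \<gamma> i m else 0) - (if i = m then spin emb N \<gamma> l j else 0)
         + (if j = l \<and> i = m then emb (of_int (l - i)) else 0)
     \<and> commut (tee emb N \<gamma> e i j) (tee emb N \<gamma> e l m)
       = (if j = l then tee emb N \<gamma> e i m else 0) - (if i = m then tee emb N \<gamma> e l j else 0)
         + (if j = l \<and> i = m then emb ((k + 1) * of_int (l - i)) else 0)
     \<and> Dirac emb N \<gamma> e * \<gamma> i j + \<gamma> i j * Dirac emb N \<gamma> e = 2 * tee emb N \<gamma> e i j
     \<and> commut (Dirac emb N \<gamma> e) (tee emb N \<gamma> e i j)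
       = emb ((k + 1) * of_int (i - j)) * \<gamma> i j
     \<and> commut (Dirac emb N \<gamma> e ^ 2) (\<gamma> i j)
       = emb (2 * (k + 1) * of_int (i - j)) * \<gamma> i j
     \<and> commut (Dirac emb N \<gamma> e ^ 2) (tee emb N \<gamma> e i j)
       = emb (2 * (k + 1) * of_int (i - j)) * tee emb N \<gamma> e i j"
proof -
  interpret A: Aset emb N k e \<gamma> by (rule Aset.intro[OF alg rel_e rel_cl N1 rel_eg])
  have c4: "Dirac emb N \<gamma> e * \<gamma> i j + \<gamma> i j * Dirac emb N \<gamma> e = 2 * tee emb N \<gamma> e i j"
    by (rule A.acomD[OF idx(1,2)])
  have c5': "Dirac emb N \<gamma> e * tee emb N \<gamma> e i j - tee emb N \<gamma> e i j * Dirac emb N \<gamma> e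
     = emb ((k + 1) * of_int (i - j)) * \<gamma> i j"
    using A.commD[OF idx(1,2)] by (simp add: commut_def)
  have e2: "emb (2 * (k + 1) * of_int (i - j)) = 2 * emb ((k + 1) * of_int (i - j))"
  proof -
    have "emb (2 * (k + 1) * of_int (i - j)) = emb (2 * ((k + 1) * of_int (i - j)))"
      by (simp only: mult.assoc)
    also have "\<dots> = 2 * emb ((k + 1) * of_int (i - j))" by (simp only: A.emb_mult A.emb_numeral)
    finally show ?thesis .
  qed
  have c6a: "commut (Dirac emb N \<gamma> e ^ 2) (\<gamma> i j) = emb (2 * (k + 1) * of_int (i - j)) * \<gamma> i j"
    using sq_comm1[OF c4 c5'] unfolding commut_def e2 by (simp add: mult.assoc)
  have c6b: "commut (Dirac emb N \<gamma> e ^ 2) (tee emb N \<gamma> e i j) = emb (2 * (k + 1) * of_int (i - j)) * tee emb N \<gamma> e i j"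
    using sq_comm2[OF c4 c5' A.emb_central] unfolding commut_def e2 by (simp add: mult_2 mult_2_right distrib_left distrib_right)
  show ?thesis
    using A.spin_gamma[OF idx] A.spin_spin[OF idx] A.tee_tee[OF idx] c4 A.commD[OF idx(1,2)] c6a c6b
    by blast
qed

end
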